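(* For every integer $n\ge 0$, $$\binom{2n}{n}\,{}_3F_2\!\left(\begin{matrix}-n,\,-n,\,\tfrac12\\ -n+\tfrac12,\,2\end{matrix};1\right)=\begin{cases}\binom{n}{n/2}^2,& n \text{ even},\\[2pt] \binom{n}{(n-1)/2}^2,& n\text{ odd}.\end{cases}$$
   Context: ${}_3F_2\!\left(\begin{matrix}a_1,a_2,a_3\\ b_1,b_2\end{matrix};z\right)=\sum_{j\ge0}\frac{(a_1)_j(a_2)_j(a_3)_j}{(b_1)_j(b_2)_j}\frac{z^j}{j!}$, where $(x)_j=x(x+1)\cdots(x+j-1)$ is the Pochhammer symbol; when $a_1=-n$ is a nonpositive integer the series terminates at $j=n$. *)

theory Defs
  imports Complex_Main
begin

definition hyp3F2 :: "real \<Rightarrow> real \<Rightarrow> real \<Rightarrow> real \<Rightarrow> real \<Rightarrow> real \<Rightarrow> real" where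
  "hyp3F2 a1 a2 a3 b1 b2 z =
     (\<Sum>j. pochhammer a1 j * pochhammer a2 j * pochhammer a3 j
            / (pochhammer b1 j * pochhammer b2 j) * z ^ j / fact j)"

end

theory Submission
  imports Defs
begin

definition FF :: "nat \<Rightarrow> nat \<Rightarrow> real" where
  "FF n j = (if j \<le> n then (-1)^j * real (n choose j) * real ((2*j) choose j)
      * real ((2*(n-j)) choose (n-j)) / (real j + 1) else 0)"

lemma FF_fact:
  assumes "n = j + m"
  shows "FF n j = (-1)^j * fact n * fact (2*j) * fact (2*m)
     / (fact j * fact j * fact j * fact m * fact m * fact m * (real j + 1))"
proof -
  have a: "real (n choose j) = fact n / (fact j * fact m)"
    using binomial_fact[of j n] assms by simp
  have b: "real ((2*j) choose j) = fact (2*j) / (fact j * fact j)"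
    using binomial_fact[of j "2*j"] by (simp add: mult_2)
  have c: "real ((2*m) choose m) = fact (2*m) / (fact m * fact m)"
    using binomial_fact[of m "2*m"] by (simp add: mult_2)
  have "j \<le> n" "n - j = m" using assms by auto
  then show ?thesis unfolding FF_def by (simp add: a b c)
qed

lemma aux_j:
  fixes x y FN J M fj fm :: real
  assumes "x \<ge> 0" "y \<ge> 0" "fj \<noteq> 0" "fm \<noteq> 0"
  shows "- (FN * ((2*x+2)*(2*x+1)*J) * M / (((x+1)*fj) * ((x+1)*fj) * ((x+1)*fj) * fm * fm * fm * (x+1+1)))
    = FN * J * ((2*y+2)*(2*y+1)*M) / (fj*fj*fj*((y+1)*fm)*((y+1)*fm)*((y+1)*fm)*(x+1))
      * (- ((y+1)^2 * (2*x+1)) / ((x+1)*(x+2)*(2*y+1)))"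
proof -
  have "x+1 \<noteq> 0" "x+2\<noteq>0" "y+1\<noteq>0" "2*y+1\<noteq>0" using assms by auto
  then show ?thesis using assms unfolding power2_eq_square by (simp add: divide_simps) algebra
qed

lemma FF_j:
  "FF n (Suc j) = FF n j * (- (((real n - real j)^2) * (2*real j+1)) / ((real j+1)*(real j+2)*(2*real n-2*real j-1)))"
proof (cases "j < n")
  case True
  then obtain m where m: "n = j + Suc m" using less_imp_Suc_add[OF True] by auto
  have e1: "FF n (Suc j) = (-1)^(Suc j) * fact n * fact (2*Suc j) * fact (2*m)
     / (fact (Suc j) * fact (Suc j) * fact (Suc j) * fact m * fact m * fact m * (real (Suc j) + 1))"
    by (rule FF_fact) (simp add: m)
  have e2: "FF n j = (-1)^j * fact n * fact (2*j) * fact (2*Suc m)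
     / (fact j * fact j * fact j * fact (Suc m) * fact (Suc m) * fact (Suc m) * (real j + 1))"
    by (rule FF_fact) (simp add: m)
  have f1: "fact (2*Suc j) = (2*real j+2)*(2*real j+1)*fact (2*j)"
  proof -
    have "2*Suc j = Suc (Suc (2*j))" by simp
    then show ?thesis by (simp only: fact_Suc) (simp add: algebra_simps)
  qed
  have f2: "fact (2*Suc m) = (2*real m+2)*(2*real m+1)*(fact (2*m)::real)"
  proof -
    have "2*Suc m = Suc (Suc (2*m))" by simp
    then show ?thesis by (simp only: fact_Suc) (simp add: algebra_simps)
  qed
  have f3: "fact (Suc j) = (real j + 1) * fact j" "fact (Suc m) = (real m + 1) * (fact m :: real)"
    by (simp_all only: fact_Suc) (simp_all add: algebra_simps)
  have g: "real n - real j = real m + 1" "2*real n-2*real j-1 = 2 * real m + 1" using m by simp_all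
  have A: "- (fact n * ((2*real j+2)*(2*real j+1)*fact (2*j)) * fact (2*m) / (((real j+1)*fact j) * ((real j+1)*fact j) * ((real j+1)*fact j) * fact m * fact m * fact m * (real j+1+1)))
    = fact n * fact (2*j) * ((2*real m+2)*(2*real m+1)*fact (2*m)) / (fact j*fact j*fact j*((real m+1)*fact m)*((real m+1)*fact m)*((real m+1)*fact m)*(real j+1))
      * (- ((real m+1)^2 * (2*real j+1)) / ((real j+1)*(real j+2)*(2*real m+1)))"
    by (rule aux_j) auto
  have "FF n (Suc j) = (-1)^j * (- (fact n * ((2*real j+2)*(2*real j+1)*fact (2*j)) * fact (2*m) / (((real j+1)*fact j) * ((real j+1)*fact j) * ((real j+1)*fact j) * fact m * fact m * fact m * (real j+1+1))))"
    unfolding e1 f1 f3 by (simp add: add.assoc add.commute[of 2] mult.assoc)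
  also have "\<dots> = FF n j * (- (((real n - real j)^2) * (2*real j+1)) / ((real j+1)*(real j+2)*(2*real n-2*real j-1)))"
    unfolding A e2 f2 f3 g by (simp add: mult.assoc)
  finally show ?thesis .
next
  case False
  then show ?thesis
  proof (cases "j = n")
    case True then show ?thesis by (simp add: FF_def)
  next
    case False
    with \<open>\<not> j < n\<close> show ?thesis by (simp add: FF_def)
  qed
qed

lemma aux_n:
  fixes c FN M D N y fm :: real
  assumes "y \<ge> 0" "fm \<noteq> 0" "D \<noteq> 0"
  shows "c * FN * M / (D * fm * fm * fm) * (2*(N+1)*(2*y+1))
    = c * ((N+1)*FN) * ((2*y+2)*(2*y+1)*M) / (D * ((y+1)*fm) * ((y+1)*fm) * ((y+1)*fm)) * (y+1)^2"
proof -
  have "y+1 \<noteq> 0" using assms by auto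
  then show ?thesis using assms unfolding power2_eq_square by (simp add: divide_simps) algebra
qed

lemma FF_n:
  "FF n j * (2*(real n+1)*(2*real n+1-2*real j)) = FF (Suc n) j * (real n+1-real j)^2"
proof (cases "j \<le> n")
  case True
  then obtain m where m: "n = j + m" using le_Suc_ex by blast
  have e1: "FF n j = (-1)^j * fact n * fact (2*j) * fact (2*m)
     / (fact j * fact j * fact j * fact m * fact m * fact m * (real j + 1))"
    by (rule FF_fact) (simp add: m)
  have e2: "FF (Suc n) j = (-1)^j * fact (Suc n) * fact (2*j) * fact (2*Suc m)
     / (fact j * fact j * fact j * fact (Suc m) * fact (Suc m) * fact (Suc m) * (real j + 1))"
    by (rule FF_fact) (simp add: m)
  have f2: "fact (2*Suc m) = (2*real m+2)*(2*real m+1)*(fact (2*m)::real)"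
  proof -
    have "2*Suc m = Suc (Suc (2*m))" by simp
    then show ?thesis by (simp only: fact_Suc) (simp add: algebra_simps)
  qed
  have f3: "fact (Suc n) = (real n + 1) * fact n" "fact (Suc m) = (real m + 1) * (fact m :: real)"
    by (simp_all only: fact_Suc) (simp_all add: algebra_simps)
  have g: "real n + 1 - real j = real m + 1" "2*real n+1-2*real j = 2 * real m + 1" using m by simp_all
  have A: "((-1)^j * fact (2*j)) * fact n * fact (2*m) / ((fact j * fact j * fact j * (real j + 1)) * fact m * fact m * fact m) * (2*(real n+1)*(2*real m+1))
    = ((-1)^j * fact (2*j)) * ((real n+1)*fact n) * ((2*real m+2)*(2*real m+1)*fact (2*m)) / ((fact j * fact j * fact j * (real j + 1)) * ((real m+1)*fact m) * ((real m+1)*fact m) * ((real m+1)*fact m)) * (real m+1)^2"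
    by (rule aux_n) auto
  show ?thesis using A unfolding e1 e2 f2 f3 g by (simp add: ac_simps)
next
  case False
  then show ?thesis
  proof (cases "j = Suc n")
    case True then show ?thesis by (simp add: FF_def)
  next
    case False
    with \<open>\<not> j \<le> n\<close> show ?thesis by (simp add: FF_def)
  qed
qed

definition p0 :: "real \<Rightarrow> real" where "p0 x = 320+1088*x+1424*x^2+896*x^3+272*x^4+32*x^5"
definition p1 :: "real \<Rightarrow> real" where "p1 x = 112+240*x+188*x^2+64*x^3+8*x^4"
definition p2 :: "real \<Rightarrow> real" where "p2 x = -(108+252*x+231*x^2+104*x^3+23*x^4+2*x^5)"
definition QQ :: "real \<Rightarrow> real \<Rightarrow> real" where
  "QQ x y = y*(64+3*y-51*y^2+10*y^3)+x*y*(166+52*y-100*y^2+14*y^3)+x^2*y*(151+85*y-62*y^2+4*y^3)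
     +x^3*y*(58+46*y-12*y^2)+x^4*y*(8+8*y)"

lemma aux_rec:
  fixes a b c B x y :: real
  assumes ha: "a * (2*(x+1)*(2*x+1-2*y)) = b * (x+1-y)^2"
    and hb: "b * (2*(x+2)*(2*x+3-2*y)) = B * (x+2-y)^2"
    and hc: "c = B * (- (((x+2-y)^2) * (2*y+1)) / ((y+1)*(y+2)*(2*x+3-2*y)))"
    and nz: "2*x+1-2*y \<noteq> 0" "2*x+3-2*y \<noteq> 0" "x+1 \<noteq> 0" "x+2 \<noteq> 0" "y+1 \<noteq> 0" "y+2 \<noteq> 0"
  shows "p0 x * a + p1 x * b + p2 x * B = c * QQ x (y+1) / (2*x+1-2*y) - B * QQ x y / (2*x+3-2*y)"
proof -
  have d1: "2*(x+2)*(2*x+3-2*y) \<noteq> 0" "2*(x+1)*(2*x+1-2*y) \<noteq> 0" using nz by simp_all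
  have b: "b = B * (x+2-y)^2 / (2*(x+2)*(2*x+3-2*y))" using hb d1 by (simp add: eq_divide_eq)
  have a: "a = b * (x+1-y)^2 / (2*(x+1)*(2*x+1-2*y))" using ha d1 by (simp add: eq_divide_eq)
  show ?thesis unfolding a b hc p0_def p1_def p2_def QQ_def using nz
    by (simp add: divide_simps) algebra
qed

definition GG :: "nat \<Rightarrow> nat \<Rightarrow> real" where
  "GG n j = FF (n+2) j * QQ (real n) (real j) / (2*real n+3-2*real j)"

lemma odd_nz: "2*real n + (2*real k + 1) - 2*real j \<noteq> 0"
proof -
  have "2*n + (2*k+1) \<noteq> 2*j" by presburger
  then have "real (2*n + (2*k+1)) \<noteq> real (2*j)" by (simp only: of_nat_eq_iff) simp
  then show ?thesis by simp
qed

lemma step_j: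
  "p0 (real n) * FF n j + p1 (real n) * FF (Suc n) j + p2 (real n) * FF (Suc (Suc n)) j
    = GG n (Suc j) - GG n j"
proof -
  have ha: "FF n j * (2*(real n+1)*(2*real n+1-2*real j)) = FF (Suc n) j * (real n+1-real j)^2"
    by (rule FF_n)
  have hb: "FF (Suc n) j * (2*(real n+2)*(2*real n+3-2*real j)) = FF (Suc (Suc n)) j * (real n+2-real j)^2"
    using FF_n[of "Suc n" j] by (simp add: algebra_simps)
  have hc: "FF (Suc (Suc n)) (Suc j) = FF (Suc (Suc n)) j * (- (((real n+2-real j)^2) * (2*real j+1)) / ((real j+1)*(real j+2)*(2*real n+3-2*real j)))"
    using FF_j[of "Suc (Suc n)" j] by (simp add: algebra_simps)
  have n1: "2*real n+1-2*real j \<noteq> 0" using odd_nz[of n 0 j] by simp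
  have n2: "2*real n+3-2*real j \<noteq> 0" using odd_nz[of n 1 j] by simp
  have r: "p0 (real n) * FF n j + p1 (real n) * FF (Suc n) j + p2 (real n) * FF (Suc (Suc n)) j
    = FF (Suc (Suc n)) (Suc j) * QQ (real n) (real j+1) / (2*real n+1-2*real j) - FF (Suc (Suc n)) j * QQ (real n) (real j) / (2*real n+3-2*real j)"
    by (rule aux_rec[OF ha hb hc n1 n2]) (simp_all add: add_pos_nonneg)
  have "2*real n+3-2*real (Suc j) = 2*real n+1-2*real j" by simp
  then show ?thesis unfolding r GG_def by (simp add: add_ac)
qed

definition SS :: "nat \<Rightarrow> real" where "SS n = (\<Sum>j<Suc n. FF n j)"

lemma SS_ext: "(\<Sum>j<Suc n + d. FF n j) = SS n"
  by (induction d) (simp_all add: SS_def FF_def)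

lemma SS_rec: "p0 (real n) * SS n + p1 (real n) * SS (Suc n) + p2 (real n) * SS (Suc (Suc n)) = 0"
proof -
  have "(\<Sum>j<n+3. p0 (real n) * FF n j + p1 (real n) * FF (Suc n) j + p2 (real n) * FF (Suc (Suc n)) j)
     = GG n (n+3) - GG n 0"
    unfolding step_j by (rule sum_lessThan_telescope)
  also have "\<dots> = 0" by (simp add: GG_def FF_def QQ_def)
  finally have z: "(\<Sum>j<n+3. p0 (real n) * FF n j + p1 (real n) * FF (Suc n) j + p2 (real n) * FF (Suc (Suc n)) j) = 0" .
  have e0: "(\<Sum>j<n+3. FF n j) = SS n" proof -
    have "n+3 = Suc n + 2" by simp
    then show ?thesis by (simp only: SS_ext)
  qed
  have e1: "(\<Sum>j<n+3. FF (Suc n) j) = SS (Suc n)" proof -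
    have "n+3 = Suc (Suc n) + 1" by simp
    then show ?thesis by (simp only: SS_ext)
  qed
  have e2: "(\<Sum>j<n+3. FF (Suc (Suc n)) j) = SS (Suc (Suc n))" proof -
    have "n+3 = Suc (Suc (Suc n)) + 0" by simp
    then show ?thesis by (simp only: SS_ext)
  qed
  show ?thesis using z unfolding sum.distrib sum_distrib_left[symmetric] e0 e1 e2 .
qed

definition aa :: "nat \<Rightarrow> real" where "aa n = real ((n choose (n div 2))^2)"

lemma aux_even:
  fixes u v w y :: real
  assumes "y \<ge> 0" "(y+1)*v = (2*y+1)*u" "(y+1)*w = (2*y+2)*v"
  shows "p0 (2*y) * u^2 + p1 (2*y) * v^2 + p2 (2*y) * w^2 = 0"
proof -
  have nz: "y+1 \<noteq> 0" using assms by auto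
  have v: "v = (2*y+1)*u/(y+1)" using assms(2) nz by (simp add: eq_divide_eq mult.commute)
  have w: "w = (2*y+2)*v/(y+1)" using assms(3) nz by (simp add: eq_divide_eq mult.commute)
  show ?thesis unfolding w v p0_def p1_def p2_def using nz by (simp add: divide_simps) algebra
qed

lemma aux_odd:
  fixes u v w y :: real
  assumes "y \<ge> 0" "(y+1)*v = (2*y+2)*u" "(y+2)*w = (2*y+3)*v"
  shows "p0 (2*y+1) * u^2 + p1 (2*y+1) * v^2 + p2 (2*y+1) * w^2 = 0"
proof -
  have nz: "y+1 \<noteq> 0" "y+2 \<noteq> 0" using assms by auto
  have v: "v = (2*y+2)*u/(y+1)" using assms(2) nz by (simp add: eq_divide_eq mult.commute)
  have w: "w = (2*y+3)*v/(y+2)" using assms(3) nz by (simp add: eq_divide_eq mult.commute)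
  show ?thesis unfolding w v p0_def p1_def p2_def using nz by (simp add: divide_simps) algebra
qed

lemma binL1: "real (Suc N choose Suc k) * (real k + 1) = real (N choose k) * (real N + 1)"
proof -
  have "real (Suc N * (N choose k)) = real ((Suc N choose Suc k) * Suc k)"
    by (simp only: Suc_times_binomial_eq)
  then show ?thesis by (simp add: algebra_simps)
qed

lemma binL2: "k \<le> N \<Longrightarrow> real (Suc N choose k) * (real N + 1 - real k) = real (N choose k) * (real N + 1)"
proof -
  assume "k \<le> N"
  have e: "real (Suc N - k) * real (Suc N choose k) = real (Suc N) * real (N choose k)"
    using binomial_absorb_comp[of "Suc N" k] by (metis of_nat_mult diff_Suc_1)
  have "real (Suc N - k) = real N + 1 - real k" using \<open>k \<le> N\<close> by (simp add: of_nat_diff)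
  then show ?thesis using e by (simp add: algebra_simps)
qed

lemma aa_rec: "p0 (real n) * aa n + p1 (real n) * aa (Suc n) + p2 (real n) * aa (Suc (Suc n)) = 0"
proof (cases "even n")
  case True
  then obtain m where m: "n = 2*m" by blast
  have d: "n div 2 = m" "Suc n div 2 = m" "Suc (Suc n) div 2 = Suc m" using m by simp_all
  have h1: "(real m + 1) * real (Suc (2*m) choose m) = (2*real m+1) * real (2*m choose m)"
    using binL2[of m "2*m"] by (simp add: algebra_simps)
  have h2: "(real m + 1) * real (Suc (Suc (2*m)) choose Suc m) = (2*real m+2) * real (Suc (2*m) choose m)"
    using binL1[of "Suc (2*m)" m] by (simp add: algebra_simps)
  have "p0 (2*real m) * real (2*m choose m)^2 + p1 (2*real m) * real (Suc (2*m) choose m)^2 + p2 (2*real m) * real (Suc (Suc (2*m)) choose Suc m)^2 = 0"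
    by (rule aux_even[OF _ h1 h2]) simp
  then show ?thesis unfolding aa_def d using m by simp
next
  case False
  then obtain m where m: "n = 2*m+1" using oddE by blast
  have d: "n div 2 = m" "Suc n div 2 = Suc m" "Suc (Suc n) div 2 = Suc m" using m by simp_all
  have h1: "(real m + 1) * real (Suc (Suc (2*m)) choose Suc m) = (2*real m+2) * real (Suc (2*m) choose m)"
    using binL1[of "Suc (2*m)" m] by (simp add: algebra_simps)
  have h2: "(real m + 2) * real (Suc (Suc (Suc (2*m))) choose Suc m) = (2*real m+3) * real (Suc (Suc (2*m)) choose Suc m)"
    using binL2[of "Suc m" "Suc (Suc (2*m))"] by (simp add: algebra_simps)
  have "p0 (2*real m+1) * real (Suc (2*m) choose m)^2 + p1 (2*real m+1) * real (Suc (Suc (2*m)) choose Suc m)^2 + p2 (2*real m+1) * real (Suc (Suc (Suc (2*m))) choose Suc m)^2 = 0"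
    by (rule aux_odd[OF _ h1 h2]) simp
  moreover have "real n = 2*real m + 1" using m by simp
  ultimately show ?thesis unfolding aa_def d using m by (simp only: of_nat_power Suc_eq_plus1)
qed

lemma SS_aa: "SS n = aa n \<and> SS (Suc n) = aa (Suc n)"
proof (induction n)
  case 0
  show ?case by (simp add: SS_def aa_def FF_def)
next
  case (Suc n)
  have p: "p2 (real n) \<noteq> 0" unfolding p2_def
    by (smt (verit) of_nat_0_le_iff zero_le_power)
  have e: "SS n = aa n" "SS (Suc n) = aa (Suc n)" using Suc.IH by auto
  have "p0 (real n) * aa n + p1 (real n) * aa (Suc n) + p2 (real n) * SS (Suc (Suc n)) = 0"
    using SS_rec[of n] unfolding e .
  then have "p2 (real n) * SS (Suc (Suc n)) = p2 (real n) * aa (Suc (Suc n))"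
    using aa_rec[of n] by linarith
  then show ?case using p Suc.IH by simp
qed

definition TT :: "nat \<Rightarrow> nat \<Rightarrow> real" where
  "TT n j = pochhammer (- real n) j * pochhammer (- real n) j * pochhammer (1/2) j
            / (pochhammer (- real n + 1/2) j * pochhammer 2 j) * 1 ^ j / fact j"

lemma poch_half_nz: "pochhammer (- real n + 1/2) j \<noteq> (0::real)"
proof
  assume "pochhammer (- real n + 1/2) j = (0::real)"
  then obtain k where "- real n + 1/2 = - real k" by (auto simp: pochhammer_eq_0_iff)
  then have "2*real k + (2*real 0 + 1) - 2*real n = 0" by simp
  then show False using odd_nz[of k 0 n] by simp
qed

lemma TT_FF: "real ((2*n) choose n) * TT n j = FF n j"
proof (induction j)
  case 0
  show ?case by (simp add: TT_def FF_def)
next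
  case (Suc j)
  have nz1: "pochhammer (- real n + 1/2) j \<noteq> (0::real)" "pochhammer (- real n + 1/2) (Suc j) \<noteq> (0::real)"
    by (rule poch_half_nz)+
  have nz2: "pochhammer 2 j > (0::real)" "pochhammer 2 (Suc j) > (0::real)"
    by (simp_all add: pochhammer_pos)
  have nz3: "- real n + 1/2 + real j \<noteq> 0" using odd_nz[of j 0 n] by simp
  have nz4: "2*real n - 2*real j - 1 \<noteq> 0" using odd_nz[of n 0 j] odd_nz[of j 0 n] by simp
  have T: "TT n (Suc j) = TT n j * (((- real n + real j)^2 * (1/2 + real j)) / ((- real n + 1/2 + real j) * (2 + real j) * (real j + 1)))"
    unfolding TT_def pochhammer_rec' fact_Suc using nz1(1) nz2(1) nz3
    by (simp add: field_simps power2_eq_square)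
  have r: "((- real n + real j)^2 * (1/2 + real j)) / ((- real n + 1/2 + real j) * (2 + real j) * (real j + 1))
     = - (((real n - real j)^2) * (2*real j+1)) / ((real j+1)*(real j+2)*(2*real n-2*real j-1))"
  proof -
    have d1: "(- real n + 1/2 + real j) * (2 + real j) * (real j + 1) \<noteq> 0" using nz3 by simp
    have d2: "(real j+1)*(real j+2)*(2*real n-2*real j-1) \<noteq> 0" using nz4 by simp
    show ?thesis unfolding frac_eq_eq[OF d1 d2] power2_eq_square by algebra
  qed
  show ?case unfolding T FF_j[of n j] r Suc.IH[symmetric] by (simp add: mult.assoc)
qed


theorem mainTheorem5:
  fixes n :: nat
  shows "real ((2*n) choose n) *
           hyp3F2 (- real n) (- real n) (1/2) (- real n + 1/2) 2 1 =
         (if even n then real ((n choose (n div 2))^2)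
          else real ((n choose ((n - 1) div 2))^2))"
proof -
  have H: "hyp3F2 (- real n) (- real n) (1/2) (- real n + 1/2) 2 1 = suminf (TT n)"
    unfolding hyp3F2_def TT_def ..
  have C: "real ((2*n) choose n) \<noteq> 0" by simp
  have z: "TT n j = 0" if "j \<notin> {..<Suc n}" for j
  proof -
    have "real ((2*n) choose n) * TT n j = 0" using that unfolding TT_FF by (simp add: FF_def)
    then show ?thesis using C by simp
  qed
  have "suminf (TT n) = (\<Sum>j<Suc n. TT n j)" by (rule suminf_finite) (use z in auto)
  then have "real ((2*n) choose n) * hyp3F2 (- real n) (- real n) (1/2) (- real n + 1/2) 2 1
      = (\<Sum>j<Suc n. real ((2*n) choose n) * TT n j)" unfolding H by (simp only: sum_distrib_left)
  also have "\<dots> = SS n" unfolding TT_FF SS_def ..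
  also have "\<dots> = aa n" using SS_aa by blast
  also have "\<dots> = (if even n then real ((n choose (n div 2))^2)
          else real ((n choose ((n - 1) div 2))^2))"
  proof (cases "even n")
    case False
    then have "(n - 1) div 2 = n div 2" by (auto elim: oddE)
    then show ?thesis using False by (simp add: aa_def)
  qed (simp add: aa_def)
  finally show ?thesis .
qed

end
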